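(* Let $B$ be an even unimodular lattice of rank $r$ with a fixed basis, and let $I_{1,1}$ have standard basis $x,y$ ($\langle x,x\rangle=1=-\langle y,y\rangle$, $\langle x,y\rangle=0$). Let $(\tfrac12)I_{1,1}=\{\tfrac12(p x+q y): p,q\in\mathbb{Z},\ p\equiv q \pmod 2\}$ with the form extended bilinearly from $I_{1,1}$, and regard $L=B\oplus I_{1,1}$ and $M=B\oplus(\tfrac12)I_{1,1}$ as $\mathbb{Z}$-submodules of the same rational quadratic space $(B\oplus I_{1,1})\otimes\mathbb{Q}$. Then $O(M)\cong O(L)$; the isomorphism is given by the fact that every isometry of $M$ (extended $\mathbb{Q}$-linearly) maps $L$ onto $L$, and every isometry of $L$ (extended $\mathbb{Q}$-linearly) maps $M$ onto $M$.
   Context: $O(L)$ denotes the group of isometries of a lattice (or $\mathbb{Z}$-module with a $\mathbb{Q}$-valued symmetric bilinear form) $L$ onto itself. Even: all norms $\langle\eta,\eta\rangle$ even; unimodular: Gram determinant $\pm1$. *)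

theory Defs
  imports "Jordan_Normal_Form.Determinant" "HOL-Library.FuncSet"
begin

text \<open>The lattice B is given by its Gram matrix G (an r x r integer matrix) with respect
  to the fixed basis. The ambient rational quadratic space (B + I_{1,1}) tensor Q is
  rat vectors of dimension r+2: coordinates 0..r-1 are B-coordinates, coordinate r is
  the x-coordinate and coordinate r+1 the y-coordinate.\<close>

definition even_unimodular :: "int mat \<Rightarrow> nat \<Rightarrow> bool" where
  "even_unimodular G r \<longleftrightarrow>
     G \<in> carrier_mat r r \<and> transpose_mat G = G \<and>
     (\<forall>v \<in> carrier_vec r. even (v \<bullet> (G *\<^sub>v v))) \<and>
     (det G = 1 \<or> det G = -1)"

definition gramLM :: "int mat \<Rightarrow> nat \<Rightarrow> rat mat" where
  "gramLM G r = mat (r+2) (r+2) (\<lambda>(i,j).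
      if i < r \<and> j < r then of_int (G $$ (i,j))
      else if i = j \<and> i = r then 1
      else if i = j \<and> i = r + 1 then -1
      else 0)"

definition qform :: "int mat \<Rightarrow> nat \<Rightarrow> rat vec \<Rightarrow> rat vec \<Rightarrow> rat" where
  "qform G r u v = u \<bullet> (gramLM G r *\<^sub>v v)"

definition Lset :: "nat \<Rightarrow> rat vec set" where
  "Lset r = {v \<in> carrier_vec (r+2). \<forall>i < r+2. v $ i \<in> \<int>}"

definition Mset :: "nat \<Rightarrow> rat vec set" where
  "Mset r = {v \<in> carrier_vec (r+2). (\<forall>i < r. v $ i \<in> \<int>) \<and>
     (\<exists>p q :: int. v $ r = of_int p / 2 \<and> v $ (r+1) = of_int q / 2 \<and> even (p - q))}"

definition isom_group :: "int mat \<Rightarrow> nat \<Rightarrow> rat vec set \<Rightarrow> (rat vec \<Rightarrow> rat vec) set" where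
  "isom_group G r X = {f. bij_betw f X X \<and>
      (\<forall>u\<in>X. \<forall>v\<in>X. f (u + v) = f u + f v) \<and>
      (\<forall>u\<in>X. \<forall>v\<in>X. qform G r (f u) (f v) = qform G r u v) \<and>
      f \<in> extensional X}"

definition rat_linear :: "nat \<Rightarrow> (rat vec \<Rightarrow> rat vec) \<Rightarrow> bool" where
  "rat_linear r g \<longleftrightarrow> g \<in> carrier_vec (r+2) \<rightarrow> carrier_vec (r+2) \<and>
     (\<forall>u\<in>carrier_vec (r+2). \<forall>v\<in>carrier_vec (r+2). g (u + v) = g u + g v) \<and>
     (\<forall>c. \<forall>u\<in>carrier_vec (r+2). g (c \<cdot>\<^sub>v u) = c \<cdot>\<^sub>v g u)"

end

theory Submission
  imports Defs
begin

lemma gram_carrier[simp]: "gramLM G r \<in> carrier_mat (r+2) (r+2)"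
  by (simp add: gramLM_def)

lemma qform_add_left: "u \<in> carrier_vec (r+2) \<Longrightarrow> v \<in> carrier_vec (r+2) \<Longrightarrow> w \<in> carrier_vec (r+2) \<Longrightarrow>
  qform G r (u + v) w = qform G r u w + qform G r v w"
proof -
  assume a: "u \<in> carrier_vec (r+2)" "v \<in> carrier_vec (r+2)" "w \<in> carrier_vec (r+2)"
  have "gramLM G r *\<^sub>v w \<in> carrier_vec (r+2)" using a gram_carrier mult_mat_vec_carrier by blast
  then show ?thesis unfolding qform_def using a by (rule_tac add_scalar_prod_distrib[of _ "r+2"]) auto
qed

lemma qform_add_right: "u \<in> carrier_vec (r+2) \<Longrightarrow> v \<in> carrier_vec (r+2) \<Longrightarrow> w \<in> carrier_vec (r+2) \<Longrightarrow>
  qform G r w (u + v) = qform G r w u + qform G r w v"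
proof -
  assume a: "u \<in> carrier_vec (r+2)" "v \<in> carrier_vec (r+2)" "w \<in> carrier_vec (r+2)"
  have c: "gramLM G r *\<^sub>v u \<in> carrier_vec (r+2)" "gramLM G r *\<^sub>v v \<in> carrier_vec (r+2)"
    using a gram_carrier mult_mat_vec_carrier by blast+
  have "gramLM G r *\<^sub>v (u + v) = gramLM G r *\<^sub>v u + gramLM G r *\<^sub>v v"
    using a by (rule_tac mult_add_distrib_mat_vec[OF gram_carrier]) auto
  then show ?thesis unfolding qform_def using a c by (simp add: scalar_prod_add_distrib[of _ "r+2"])
qed

lemma qform_smult_left: "u \<in> carrier_vec (r+2) \<Longrightarrow> w \<in> carrier_vec (r+2) \<Longrightarrow>
  qform G r (c \<cdot>\<^sub>v u) w = c * qform G r u w"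
  unfolding qform_def by (simp add: gramLM_def)

lemma qform_smult_right: "u \<in> carrier_vec (r+2) \<Longrightarrow> w \<in> carrier_vec (r+2) \<Longrightarrow>
  qform G r w (c \<cdot>\<^sub>v u) = c * qform G r w u"
proof -
  assume a: "u \<in> carrier_vec (r+2)" "w \<in> carrier_vec (r+2)"
  have "gramLM G r *\<^sub>v (c \<cdot>\<^sub>v u) = c \<cdot>\<^sub>v (gramLM G r *\<^sub>v u)"
    using a by (rule_tac mult_mat_vec[OF gram_carrier]) auto
  then show ?thesis unfolding qform_def using a by (simp add: gramLM_def)
qed

definition bp :: "int mat \<Rightarrow> nat \<Rightarrow> rat vec \<Rightarrow> rat vec \<Rightarrow> rat" where
  "bp G r u v = (\<Sum>i<r. \<Sum>j<r. u$i * of_int (G$$(i,j)) * v$j)"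

lemma qform_formula: assumes "u \<in> carrier_vec (r+2)" "v \<in> carrier_vec (r+2)"
  shows "qform G r u v = bp G r u v + u$r * v$r - u$(Suc r) * v$(Suc r)"
proof -
  let ?A = "gramLM G r"
  have row: "(?A *\<^sub>v v) $ i = (\<Sum>j<r+2. ?A $$ (i,j) * v$j)" if "i < r+2" for i
    using that assms by (simp add: scalar_prod_def gramLM_def lessThan_atLeast0 mult.commute)
  have q: "qform G r u v = (\<Sum>i<r+2. u$i * (\<Sum>j<r+2. ?A $$ (i,j) * v$j))"
    unfolding qform_def scalar_prod_def using assms row
    by (auto simp: gramLM_def lessThan_atLeast0 intro!: sum.cong)
  have inner: "(\<Sum>j<r+2. ?A $$ (i,j) * v$j) = (\<Sum>j<r. of_int (G$$(i,j)) * v$j)" if "i < r" for i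
    using that by (simp add: gramLM_def)
  have innerr: "(\<Sum>j<r+2. ?A $$ (r,j) * v$j) = v$r"
    by (simp add: gramLM_def)
  have innerr1: "(\<Sum>j<r+2. ?A $$ (r+1,j) * v$j) = - v$(r+1)"
    by (simp add: gramLM_def)
  define F where "F i = u$i * (\<Sum>j<r+2. ?A $$ (i,j) * v$j)" for i
  have s: "(\<Sum>i<r+2. F i) = (\<Sum>i<r. F i) + F r + F (r+1)" by simp
  have s2: "(\<Sum>i<r. F i) = bp G r u v" unfolding bp_def F_def
    by (rule sum.cong, simp, subst inner, simp, simp add: sum_distrib_left mult.assoc)
  show ?thesis unfolding q using s s2 unfolding F_def innerr innerr1 by simp
qed


lemma bp_Ints: assumes "\<forall>i<r. u$i \<in> \<int>" "\<forall>i<r. v$i \<in> \<int>" shows "bp G r u v \<in> \<int>"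
  unfolding bp_def using assms by (intro Ints_sum Ints_mult) auto

lemma bp_smult_left: assumes "u \<in> carrier_vec (r+2)" shows "bp G r (c \<cdot>\<^sub>v u) v = c * bp G r u v"
  unfolding bp_def using assms by (simp add: sum_distrib_left mult.assoc)

lemma int_vec_quad: fixes G :: "int mat" assumes "G \<in> carrier_mat r r" "x \<in> carrier_vec r"
  shows "x \<bullet> (G *\<^sub>v x) = (\<Sum>i<r. \<Sum>j<r. x$i * G$$(i,j) * x$j)"
  using assms by (simp add: scalar_prod_def lessThan_atLeast0 sum_distrib_left mult.assoc mult.commute mult.left_commute)

lemma bp_even: assumes eu: "even_unimodular G r" and v: "\<forall>i<r. v$i \<in> \<int>"
  shows "\<exists>k::int. bp G r v v = 2 * of_int k"
proof -
  have G: "G \<in> carrier_mat r r" using eu by (simp add: even_unimodular_def)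
  define x where "x = vec r (\<lambda>i. \<lfloor>v$i\<rfloor>)"
  have x: "x \<in> carrier_vec r" by (simp add: x_def)
  have ev: "even (x \<bullet> (G *\<^sub>v x))" using eu x by (simp add: even_unimodular_def)
  have xi: "of_int (x$i) = v$i" if "i<r" for i using v that by (simp add: x_def)
  have "of_int (x \<bullet> (G *\<^sub>v x)) = bp G r v v"
    unfolding int_vec_quad[OF G x] bp_def by (simp add: xi)
  with ev show ?thesis by (metis dvdE of_int_mult of_int_numeral)
qed


lemma Lset_D: "v \<in> Lset r \<Longrightarrow> v \<in> carrier_vec (r+2) \<and> (\<forall>i<r+2. v$i \<in> \<int>)"
  by (simp add: Lset_def)

lemma L_sub_M: "Lset r \<subseteq> Mset r"
proof
  fix v assume v: "v \<in> Lset r"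
  have "v$r \<in> \<int>" "v$(r+1) \<in> \<int>" using Lset_D[OF v] by auto
  then obtain a b where a: "v$r = of_int a" and b: "v$(r+1) = of_int b" by (auto elim!: Ints_cases)
  have "\<exists>p q :: int. v $ r = of_int p / 2 \<and> v $ (r+1) = of_int q / 2 \<and> even (p - q)"
    by (rule exI[of _ "2*a"], rule exI[of _ "2*b"]) (use a b in simp)
  then show "v \<in> Mset r" unfolding Mset_def using Lset_D[OF v] by auto
qed

lemma M_double: "v \<in> Mset r \<Longrightarrow> (2::rat) \<cdot>\<^sub>v v \<in> Lset r"
proof -
  assume "v \<in> Mset r"
  then obtain p q where v: "v \<in> carrier_vec (r+2)" "\<forall>i<r. v$i \<in> \<int>" "v$r = of_int p / 2" "v$(r+1) = of_int q / 2"
    unfolding Mset_def by auto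
  have "((2::rat) \<cdot>\<^sub>v v) $ i \<in> \<int>" if "i < r+2" for i
  proof -
    have "i < r \<or> i = r \<or> i = r+1" using that by auto
    then show ?thesis using v that by (auto simp: mult.commute)
  qed
  then show ?thesis unfolding Lset_def using v by auto
qed


lemma even_ex: "even (x::int) \<Longrightarrow> \<exists>k. x = 2*k"
  by (auto simp: dvd_def)

lemma odd_ex: "odd (x::int) \<Longrightarrow> \<exists>k. x = 2*k+1"
  by (metis odd_two_times_div_two_succ)

definition PM :: "int mat \<Rightarrow> nat \<Rightarrow> rat vec \<Rightarrow> bool" where
  "PM G r v = ((\<exists>k::int. qform G r v v = 2 * of_int k + 1) \<or> (\<forall>w\<in>Mset r. qform G r v w \<in> \<int>))"

lemma bp_zero_right: "(\<forall>j<r. w$j = 0) \<Longrightarrow> bp G r v w = 0"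
  unfolding bp_def by simp

lemma Mset_E: assumes "v \<in> Mset r"
  obtains p q where "v \<in> carrier_vec (r+2)" "\<forall>i<r. v$i \<in> \<int>" "v$r = of_int p / 2"
    "v$(Suc r) = of_int q / 2" "even (p - q)"
  using assms unfolding Mset_def by auto

lemma charM: assumes eu: "even_unimodular G r" and vM: "v \<in> Mset r"
  shows "v \<in> Lset r \<longleftrightarrow> PM G r v"
proof -
  obtain p q where v: "v \<in> carrier_vec (r+2)" "\<forall>i<r. v$i \<in> \<int>" and vr: "v$r = of_int p / 2"
    and vr1: "v$(Suc r) = of_int q / 2" and pq: "even (p - q)" using vM by (rule Mset_E)
  obtain K where K: "bp G r v v = 2 * of_int K" using bp_even[OF eu v(2)] by blast
  have qvv: "qform G r v v = 2 * of_int K + of_int p / 2 * (of_int p / 2) - of_int q / 2 * (of_int q / 2)"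
    using qform_formula[OF v(1) v(1), of G] K vr vr1 by simp
  define w1 :: "rat vec" where "w1 = vec (r+2) (\<lambda>i. if i < r then 0 else 1/2)"
  define w2 :: "rat vec" where "w2 = vec (r+2) (\<lambda>i. if i < r then 0 else if i = r then 1/2 else -1/2)"
  have w1c: "w1 \<in> carrier_vec (r+2)" and w2c: "w2 \<in> carrier_vec (r+2)" by (simp_all add: w1_def w2_def)
  have w1M: "w1 \<in> Mset r" unfolding Mset_def w1_def
    by (auto intro!: exI[of _ 1])
  have w2M: "w2 \<in> Mset r" unfolding Mset_def w2_def
    by (auto intro!: exI[of _ 1] exI[of _ "-1"])
  have qw1: "qform G r v w1 = of_int (p - q) / 4"
    using qform_formula[OF v(1) w1c, of G] vr vr1 bp_zero_right[of r w1 G v]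
    by (simp add: w1_def field_simps)
  have qw2: "qform G r v w2 = of_int (p + q) / 4"
    using qform_formula[OF v(1) w2c, of G] vr vr1 bp_zero_right[of r w2 G v]
    by (simp add: w2_def field_simps)
  show ?thesis
  proof (cases "even p")
    case True
    then have "even q" using pq by simp
    then obtain s t where s: "p = 2*s" and t: "q = 2*t" using True even_ex by metis
    have vL: "v \<in> Lset r"
    proof -
      have "v$i \<in> \<int>" if "i < r+2" for i
      proof -
        have "i < r \<or> i = r \<or> i = r+1" using that by auto
        then show ?thesis using v vr vr1 s t by auto
      qed
      then show ?thesis unfolding Lset_def using v by auto
    qed
    have "PM G r v"
    proof (cases "odd (s - t)")
      case True
      have st: "s*s - t*t = (s-t)*(s+t)" by (simp add: algebra_simps)
      have "odd (s+t)" using True by presburger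
      then have "odd (s*s - t*t)" unfolding st using True by simp
      then have "odd (2*K + s*s - t*t)" by simp
      then obtain k where "2*K + s*s - t*t = 2*k+1" using odd_ex by blast
      then have "(of_int (2*K + s*s - t*t)::rat) = of_int (2*k+1)" by (rule arg_cong)
      then have "qform G r v v = 2 * of_int k + 1" unfolding qvv s t by simp
      then show ?thesis unfolding PM_def by blast
    next
      case False
      have "qform G r v w \<in> \<int>" if wM: "w \<in> Mset r" for w
      proof -
        obtain p' q' where w: "w \<in> carrier_vec (r+2)" "\<forall>i<r. w$i \<in> \<int>" and wr: "w$r = of_int p' / 2"
          and wr1: "w$(Suc r) = of_int q' / 2" and pq': "even (p' - q')" using wM by (rule Mset_E)
        have "s*p' - t*q' = s*(p'-q') + (s-t)*q'" by (simp add: algebra_simps)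
        then have "even (s*p' - t*q')" using pq' False by simp
        then obtain m where m: "s*p' - t*q' = 2*m" using even_ex by blast
        have "qform G r v w = bp G r v w + of_int (s*p' - t*q') / 2"
          using qform_formula[OF v(1) w(1), of G] vr vr1 wr wr1 s t by (simp add: field_simps)
        also have "\<dots> = bp G r v w + of_int m" unfolding m by simp
        finally show ?thesis using bp_Ints[OF v(2) w(2), of G] by simp
      qed
      then show ?thesis unfolding PM_def by blast
    qed
    with vL show ?thesis by simp
  next
    case False
    then have oq: "odd q" using pq by simp
    have vL: "v \<notin> Lset r"
    proof
      assume "v \<in> Lset r"
      then have "v$r \<in> \<int>" using Lset_D by auto
      then show False unfolding vr using False fraction_not_in_Ints[of 2 p] by auto
    qed
    have n1: "\<not> (\<exists>k::int. qform G r v v = 2 * of_int k + 1)"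
    proof
      assume "\<exists>k::int. qform G r v v = 2 * of_int k + 1"
      then obtain k where k: "qform G r v v = 2 * of_int k + 1" by blast
      obtain a where a: "p - q = 2*a" using pq using even_ex by blast
      have "even (p+q)" using pq by presburger
      then obtain b where b: "p + q = 2*b" using even_ex by blast
      have "odd (a + b)" using a b False by presburger
      then have "even (a*b)" by auto
      then obtain m where m: "a*b = 2*m" using even_ex by blast
      have "p*p - q*q = (p-q)*(p+q)" by (simp add: algebra_simps)
      also have "\<dots> = 4*(a*b)" using a b by simp
      finally have pq8: "p*p - q*q = 8*m" using m by simp
      have "of_int p / 2 * (of_int p / 2) - of_int q / 2 * (of_int q / 2) = (of_int (p*p - q*q) / 4 :: rat)"
        by (simp add: field_simps)
      also have "\<dots> = 2 * of_int m" unfolding pq8 by simp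
      finally have "(2 * of_int K + 2 * of_int m :: rat) = 2 * of_int k + 1" using k qvv by simp
      then have "(of_int (2*K + 2*m) :: rat) = of_int (2*k + 1)" by simp
      then have "2*K + 2*m = 2*k + 1" by (simp only: of_int_eq_iff)
      then show False by presburger
    qed
    have n2: "\<not> (\<forall>w\<in>Mset r. qform G r v w \<in> \<int>)"
    proof
      assume "\<forall>w\<in>Mset r. qform G r v w \<in> \<int>"
      then have "qform G r v w1 \<in> \<int>" "qform G r v w2 \<in> \<int>" using w1M w2M by auto
      then have "4 dvd (p - q)" "4 dvd (p + q)" unfolding qw1 qw2 of_int_div_of_int_in_Ints_iff[of "p-q" 4, where 'a=rat]
        using of_int_div_of_int_in_Ints_iff[of "p-q" 4, where 'a=rat] of_int_div_of_int_in_Ints_iff[of "p+q" 4, where 'a=rat]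
        by simp_all
      then show False using False by presburger
    qed
    show ?thesis using vL n1 n2 unfolding PM_def by blast
  qed
qed


lemma ite01_mult[simp]: "(if P then 1 else 0) * (x::'a::semiring_1) = (if P then x else 0)"
  "x * (if P then 1 else 0) = (if P then x else 0)"
  "(if P then x else 0) * y = (if P then x * y else 0)" by auto

lemma test1: fixes A :: "int mat" assumes "A \<in> carrier_mat r r" "z \<in> carrier_vec r" "i < r"
  shows "(A *\<^sub>v (2 \<cdot>\<^sub>v z)) $ i = 2 * (A *\<^sub>v z) $ i"
  using assms by simp

lemma test2: fixes c :: "int vec" assumes "c \<in> carrier_vec r" "i < r"
  shows "((d \<cdot>\<^sub>m 1\<^sub>m r) *\<^sub>v c) $ i = d * c $ i"
  using assms by (simp add: scalar_prod_def mult.assoc)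

lemma test3: fixes G :: "int mat" assumes "G \<in> carrier_mat r r" "i < r"
  shows "unit_vec r i \<bullet> (G *\<^sub>v unit_vec r i) = G $$ (i,i)"
  using assms by (simp add: scalar_prod_def)


definition CH :: "int mat \<Rightarrow> nat \<Rightarrow> rat vec \<Rightarrow> bool" where
  "CH G r c = (\<forall>w\<in>Lset r. \<exists>k::int. qform G r c w - qform G r w w = 2 * of_int k)"

lemma Lset_E: assumes "w \<in> Lset r"
  obtains a b where "w \<in> carrier_vec (r+2)" "\<forall>i<r. w$i \<in> \<int>" "w$r = of_int a" "w$(Suc r) = of_int b"
proof -
  have "w$r \<in> \<int>" "w$(Suc r) \<in> \<int>" using Lset_D[OF assms] by auto
  then obtain a b where "w$r = of_int a" "w$(Suc r) = of_int b" by (auto elim!: Ints_cases)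
  then show ?thesis using that Lset_D[OF assms] by auto
qed

lemma Mnot_L_char: assumes eu: "even_unimodular G r" and vM: "v \<in> Mset r" and vL: "v \<notin> Lset r"
  shows "CH G r ((2::rat) \<cdot>\<^sub>v v)"
proof -
  obtain p q where v: "v \<in> carrier_vec (r+2)" "\<forall>i<r. v$i \<in> \<int>" and vr: "v$r = of_int p / 2"
    and vr1: "v$(Suc r) = of_int q / 2" and pq: "even (p - q)" using vM by (rule Mset_E)
  have op: "odd p"
  proof
    assume "even p"
    then have "even q" using pq by simp
    then obtain s t where s: "p = 2*s" and t: "q = 2*t" using \<open>even p\<close> even_ex by metis
    have "v$i \<in> \<int>" if "i < r+2" for i
    proof -
      have "i < r \<or> i = r \<or> i = Suc r" using that by auto
      then show ?thesis using v vr vr1 s t by auto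
    qed
    then have "v \<in> Lset r" unfolding Lset_def using v by auto
    then show False using vL by simp
  qed
  then have oq: "odd q" using pq by simp
  let ?c = "(2::rat) \<cdot>\<^sub>v v"
  have c: "?c \<in> carrier_vec (r+2)" using v by simp
  show ?thesis unfolding CH_def
  proof
    fix w assume wL: "w \<in> Lset r"
    obtain a b where w: "w \<in> carrier_vec (r+2)" "\<forall>i<r. w$i \<in> \<int>" and wr: "w$r = of_int a"
      and wr1: "w$(Suc r) = of_int b" using wL by (rule Lset_E)
    obtain m where m: "bp G r v w = of_int m" using bp_Ints[OF v(2) w(2), of G] by (auto elim!: Ints_cases)
    obtain K where K: "bp G r w w = 2 * of_int K" using bp_even[OF eu w(2)] by blast
    have "qform G r ?c w - qform G r w w = of_int (2*m + p*a - q*b - 2*K - a*a + b*b)"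
      using qform_formula[OF c w(1), of G] qform_formula[OF w(1) w(1), of G] bp_smult_left[OF v(1), where c=2 and G=G and v=w]
        m K vr vr1 wr wr1 v(1) by simp
    moreover have "even (2*m + p*a - q*b - 2*K - a*a + b*b)"
    proof -
      have e1: "even (a*(p-a))" using op by auto
      have e2: "even (b*(b-q))" using oq by auto
      obtain x y where x: "a*(p-a) = 2*x" and y: "b*(b-q) = 2*y" using e1 e2 even_ex by metis
      have "2*m + p*a - q*b - 2*K - a*a + b*b = 2*(m-K) + a*(p-a) + b*(b-q)" by (simp add: algebra_simps)
      also have "\<dots> = 2*(m-K+x+y)" unfolding x y by simp
      finally have X: "2*m + p*a - q*b - 2*K - a*a + b*b = 2*(m-K+x+y)" .
      show ?thesis unfolding X by simp
    qed
    then obtain k where "2*m + p*a - q*b - 2*K - a*a + b*b = 2*k" using even_ex by blast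
    ultimately show "\<exists>k::int. qform G r ?c w - qform G r w w = 2 * of_int k" by auto
  qed
qed


lemma unit_in_L: "i < r+2 \<Longrightarrow> unit_vec (r+2) i \<in> Lset r"
  unfolding Lset_def by auto

lemma G_diag_even: assumes eu: "even_unimodular G r" and i: "i < r" shows "even (G $$ (i,i))"
proof -
  have G: "G \<in> carrier_mat r r" using eu by (simp add: even_unimodular_def)
  have "even (unit_vec r i \<bullet> (G *\<^sub>v unit_vec r i))" using eu by (simp add: even_unimodular_def)
  then show ?thesis using test3[OF G i] by simp
qed

lemma char_half: assumes eu: "even_unimodular G r" and cL: "c \<in> Lset r" and ch: "CH G r c"
  shows "(1/2::rat) \<cdot>\<^sub>v c \<in> Mset r"
proof -
  have G: "G \<in> carrier_mat r r" and Gs: "transpose_mat G = G" and dG: "det G = 1 \<or> det G = -1"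
    using eu by (auto simp: even_unimodular_def)
  obtain a b where c: "c \<in> carrier_vec (r+2)" "\<forall>i<r. c$i \<in> \<int>" and cr: "c$r = of_int a"
      and cr1: "c$(Suc r) = of_int b" using cL by (rule Lset_E)
  define er :: "rat vec" where "er = unit_vec (r+2) r"
  define es :: "rat vec" where "es = unit_vec (r+2) (Suc r)"
  have erL: "er \<in> Lset r" and esL: "es \<in> Lset r" unfolding er_def es_def
    using unit_in_L[of r r] unit_in_L[of "Suc r" r] by auto
  have erc: "er \<in> carrier_vec (r+2)" and esc: "es \<in> carrier_vec (r+2)" unfolding er_def es_def by auto
  obtain k1 where k1: "qform G r c er - qform G r er er = 2 * of_int k1" using ch erL unfolding CH_def by blast
  obtain k2 where k2: "qform G r c es - qform G r es es = 2 * of_int k2" using ch esL unfolding CH_def by blast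
  have "qform G r c er = c$r" "qform G r er er = 1"
    using qform_formula[OF c(1) erc, of G] qform_formula[OF erc erc, of G]
      bp_zero_right[of r er G c] bp_zero_right[of r er G er] by (simp_all add: er_def)
  with k1 have "of_int a = (of_int (2*k1 + 1) :: rat)" using cr by simp
  then have a: "a = 2*k1+1" by (simp only: of_int_eq_iff)
  have "qform G r c es = - c$(Suc r)" "qform G r es es = -1"
    using qform_formula[OF c(1) esc, of G] qform_formula[OF esc esc, of G]
      bp_zero_right[of r es G c] bp_zero_right[of r es G es] by (simp_all add: es_def)
  with k2 have "of_int b = (of_int (1 - 2*k2) :: rat)" using cr1 by simp
  then have b: "b = 1 - 2*k2" by (simp only: of_int_eq_iff)
  define c' :: "int vec" where "c' = vec r (\<lambda>j. \<lfloor>c$j\<rfloor>)"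
  have c'c: "c' \<in> carrier_vec r" by (simp add: c'_def)
  have c'j: "of_int (c'$j) = c$j" if "j < r" for j using c that by (simp add: c'_def)
  have Gc_even: "even ((G *\<^sub>v c') $ i)" if i: "i < r" for i
  proof -
    define ei :: "rat vec" where "ei = unit_vec (r+2) i"
    have eiL: "ei \<in> Lset r" unfolding ei_def using i unit_in_L[of i r] by auto
    have eic: "ei \<in> carrier_vec (r+2)" unfolding ei_def by auto
    obtain k where k: "qform G r c ei - qform G r ei ei = 2 * of_int k" using ch eiL unfolding CH_def by blast
    have q1: "qform G r c ei = bp G r c ei"
      using qform_formula[OF c(1) eic, of G] i by (simp add: ei_def)
    have q2: "qform G r ei ei = of_int (G $$ (i,i))"
      using qform_formula[OF eic eic, of G] i by (simp add: ei_def bp_def)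
    have "bp G r c ei = (\<Sum>j<r. c$j * of_int (G $$ (j,i)))"
      unfolding bp_def ei_def using i by (simp add: sum.swap[of _ "{..<r}" "{..<r}"] )
    also have "\<dots> = (\<Sum>j<r. of_int (G $$ (i,j)) * of_int (c'$j))"
    proof (rule sum.cong)
      fix j assume j: "j \<in> {..<r}"
      have "G $$ (j,i) = transpose_mat G $$ (i,j)" using G i j by simp
      then have "G $$ (j,i) = G $$ (i,j)" using Gs by simp
      then show "c$j * of_int (G $$ (j,i)) = of_int (G $$ (i,j)) * of_int (c'$j)" using c'j j by simp
    qed simp
    also have "\<dots> = of_int ((G *\<^sub>v c') $ i)"
      using G i c'c by (simp add: scalar_prod_def lessThan_atLeast0)
    finally have "of_int ((G *\<^sub>v c') $ i) = (of_int (2*k + G $$ (i,i)) :: rat)"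
      using k q1 q2 by simp
    then have "(G *\<^sub>v c') $ i = 2*k + G $$ (i,i)" by (simp only: of_int_eq_iff)
    then show ?thesis using G_diag_even[OF eu i] by simp
  qed
  define z where "z = vec r (\<lambda>i. (G *\<^sub>v c') $ i div 2)"
  have zc: "z \<in> carrier_vec r" by (simp add: z_def)
  have Gcz: "G *\<^sub>v c' = 2 \<cdot>\<^sub>v z"
    using Gc_even G c'c by (auto simp: z_def)
  have adj: "adj_mat G * G = det G \<cdot>\<^sub>m 1\<^sub>m r" "adj_mat G \<in> carrier_mat r r" using adj_mat[OF G] by auto
  have c'even: "even (c'$j)" if j: "j < r" for j
  proof -
    have "((adj_mat G * G) *\<^sub>v c') $ j = (adj_mat G *\<^sub>v (G *\<^sub>v c')) $ j"
      by (simp only: assoc_mult_mat_vec[OF adj(2) G c'c])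
    also have "\<dots> = 2 * (adj_mat G *\<^sub>v z) $ j" unfolding Gcz using test1[OF adj(2) zc j] .
    finally have "det G * c'$j = 2 * (adj_mat G *\<^sub>v z) $ j" unfolding adj(1) using test2[OF c'c j] by simp
    then have "even (det G * c'$j)" by simp
    then show ?thesis using dG by auto
  qed
  let ?v = "(1/2::rat) \<cdot>\<^sub>v c"
  have "?v$i \<in> \<int>" if i: "i < r" for i
  proof -
    obtain t where "c'$i = 2*t" using c'even[OF i] even_ex by blast
    then have "c$i = 2 * of_int t" using c'j[OF i] by (metis of_int_mult of_int_numeral)
    then show ?thesis using c i by simp
  qed
  moreover have "?v$r = of_int a / 2" "?v$(Suc r) = of_int b / 2" using c cr cr1 by auto
  moreover have "even (a - b)" using a b by presburger
  ultimately show ?thesis unfolding Mset_def using c by auto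
qed


definition ext :: "nat \<Rightarrow> (rat vec \<Rightarrow> rat vec) \<Rightarrow> rat vec \<Rightarrow> rat vec" where
  "ext r f v = vec (r+2) (\<lambda>k. \<Sum>i<r+2. v$i * f (unit_vec (r+2) i) $ k)"

lemma ext_carrier[simp]: "ext r f v \<in> carrier_vec (r+2)"
  by (simp add: ext_def)

lemma ext_carrier'[simp]: "ext r f v \<in> carrier_vec (Suc (Suc r))" "dim_vec (ext r f v) = Suc (Suc r)"
  by (simp_all add: ext_def)

lemma ext_add: "u \<in> carrier_vec (r+2) \<Longrightarrow> v \<in> carrier_vec (r+2) \<Longrightarrow> ext r f (u + v) = ext r f u + ext r f v"
  by (rule eq_vecI) (auto simp: ext_def algebra_simps sum.distrib)

lemma ext_smult: "u \<in> carrier_vec (r+2) \<Longrightarrow> ext r f (c \<cdot>\<^sub>v u) = c \<cdot>\<^sub>v ext r f u"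
  by (rule eq_vecI) (auto simp: ext_def sum_distrib_left mult.assoc simp del: sum.lessThan_Suc)

lemma ext_linear: "rat_linear r (ext r f)"
  unfolding rat_linear_def by (auto simp: ext_add ext_smult)

lemma ext_unit: assumes "i < r+2" "f (unit_vec (r+2) i) \<in> carrier_vec (r+2)"
  shows "ext r f (unit_vec (r+2) i) = f (unit_vec (r+2) i)"
proof (rule eq_vecI)
  fix k assume k: "k < dim_vec (f (unit_vec (r+2) i))"
  have "(\<Sum>j<r+2. unit_vec (r+2) i $ j * f (unit_vec (r+2) j) $ k) = f (unit_vec (r+2) i) $ k"
    using assms by (simp add: sum.delta if_distrib[of "\<lambda>x. x * _"] cong: if_cong del: sum.lessThan_Suc)
  then show "ext r f (unit_vec (r+2) i) $ k = f (unit_vec (r+2) i) $ k"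
    using k assms by (simp add: ext_def del: sum.lessThan_Suc)
qed (use assms in simp)

lemma ext_cong: "(\<And>i. i < r+2 \<Longrightarrow> f (unit_vec (r+2) i) = g (unit_vec (r+2) i)) \<Longrightarrow> ext r f = ext r g"
  unfolding ext_def by (intro ext) (simp del: sum.lessThan_Suc)


definition trunc :: "nat \<Rightarrow> nat \<Rightarrow> rat vec \<Rightarrow> rat vec" where
  "trunc r k v = vec (r+2) (\<lambda>i. if i < k then v$i else 0)"

lemma L_add: "u \<in> Lset r \<Longrightarrow> v \<in> Lset r \<Longrightarrow> u + v \<in> Lset r"
  unfolding Lset_def by auto

lemma L_uminus: "u \<in> Lset r \<Longrightarrow> - u \<in> Lset r"
  unfolding Lset_def by auto

lemma L_smult_int: "u \<in> Lset r \<Longrightarrow> c \<in> \<int> \<Longrightarrow> c \<cdot>\<^sub>v u \<in> Lset r"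
  unfolding Lset_def by auto

lemma L_zero: "0\<^sub>v (r+2) \<in> Lset r"
  unfolding Lset_def by auto

lemma trunc_L: "v \<in> Lset r \<Longrightarrow> trunc r k v \<in> Lset r"
  unfolding Lset_def trunc_def by auto

lemma ext_agree_L:
  assumes add: "\<forall>u\<in>Lset r. \<forall>v\<in>Lset r. f (u + v) = f u + f v"
    and fc: "\<forall>u\<in>Lset r. f u \<in> carrier_vec (r+2)"
    and vL: "v \<in> Lset r"
  shows "ext r f v = f v"
proof -
  let ?n = "r+2"
  have z: "f (0\<^sub>v ?n) = 0\<^sub>v ?n"
  proof -
    have "f (0\<^sub>v ?n + 0\<^sub>v ?n) = f (0\<^sub>v ?n) + f (0\<^sub>v ?n)" using add L_zero by blast
    then have "f (0\<^sub>v ?n) = f (0\<^sub>v ?n) + f (0\<^sub>v ?n)" by simp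
    moreover have "f (0\<^sub>v ?n) \<in> carrier_vec ?n" using fc L_zero by blast
    ultimately show ?thesis by (metis eq_vecI index_add_vec(1) index_zero_vec(1) carrier_vecD add_cancel_right_right index_add_vec(2) index_zero_vec(2))
  qed
  have neg: "f (- u) = - f u" if u: "u \<in> Lset r" for u
  proof -
    have uc: "u \<in> carrier_vec ?n" using u Lset_D by blast
    have "f (u + - u) = f u + f (- u)" using add u L_uminus by blast
    moreover have "u + - u = 0\<^sub>v ?n" using uc by simp
    ultimately have e: "f u + f (- u) = 0\<^sub>v ?n" using z by simp
    have c1: "f u \<in> carrier_vec ?n" "f (- u) \<in> carrier_vec ?n" using fc u L_uminus by blast+
    show ?thesis
    proof (rule eq_vecI)
      fix i assume "i < dim_vec (- f u)"
      then have i: "i < ?n" using c1 by simp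
      have "(f u + f (- u)) $ i = 0" using e i by simp
      then show "f (- u) $ i = (- f u) $ i" using c1 i by simp
    qed (use c1 in simp)
  qed
  have natm: "f (of_nat m \<cdot>\<^sub>v u) = of_nat m \<cdot>\<^sub>v f u" if u: "u \<in> Lset r" for u m
  proof (induction m)
    case 0
    have uc: "u \<in> carrier_vec ?n" using u Lset_D by blast
    have "0 \<cdot>\<^sub>v u = 0\<^sub>v ?n" using uc by auto
    moreover have "f u \<in> carrier_vec ?n" using fc u by blast
    then have "0 \<cdot>\<^sub>v f u = 0\<^sub>v ?n" by auto
    ultimately show ?case using z by simp
  next
    case (Suc m)
    have uc: "u \<in> carrier_vec ?n" using u Lset_D by blast
    have fu: "f u \<in> carrier_vec ?n" using fc u by blast
    have e1: "of_nat (Suc m) \<cdot>\<^sub>v u = u + of_nat m \<cdot>\<^sub>v u" using uc by (auto simp: algebra_simps)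
    have e2: "of_nat (Suc m) \<cdot>\<^sub>v f u = f u + of_nat m \<cdot>\<^sub>v f u" using fu by (auto simp: algebra_simps)
    have "f (u + of_nat m \<cdot>\<^sub>v u) = f u + f (of_nat m \<cdot>\<^sub>v u)"
      using add u L_smult_int[OF u, of "of_nat m"] by (simp add: Nats_subset_Ints[THEN subsetD])
    then show ?case unfolding e1 e2 Suc by simp
  qed
  have intm: "f (of_int m \<cdot>\<^sub>v u) = of_int m \<cdot>\<^sub>v f u" if u: "u \<in> Lset r" for u m
  proof (cases "m \<ge> 0")
    case True
    then obtain k where "m = int k" by (metis nonneg_int_cases)
    then show ?thesis using natm[OF u, of k] by simp
  next
    case False
    then obtain k where k: "m = - int k" by (metis nonpos_int_cases linear)
    have uc: "u \<in> carrier_vec ?n" using u Lset_D by blast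
    have fu: "f u \<in> carrier_vec ?n" using fc u by blast
    have "of_int m \<cdot>\<^sub>v u = - (of_nat k \<cdot>\<^sub>v u)" using uc k by auto
    moreover have "of_nat k \<cdot>\<^sub>v u \<in> Lset r" using L_smult_int[OF u, of "of_nat k"] by (simp add: Nats_subset_Ints[THEN subsetD])
    ultimately have "f (of_int m \<cdot>\<^sub>v u) = - f (of_nat k \<cdot>\<^sub>v u)" using neg by simp
    also have "\<dots> = of_int m \<cdot>\<^sub>v f u" using natm[OF u, of k] k fu by auto
    finally show ?thesis .
  qed
  have vc: "v \<in> carrier_vec ?n" using vL Lset_D by blast
  have step: "k \<le> ?n \<Longrightarrow> ext r f (trunc r k v) = f (trunc r k v)" for k
  proof (induction k)
    case 0
    have "trunc r 0 v = 0\<^sub>v ?n" by (auto simp: trunc_def)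
    moreover have "ext r f (0\<^sub>v ?n) = 0\<^sub>v ?n"
      by (rule eq_vecI) (simp_all add: ext_def)
    ultimately show ?case using z by simp
  next
    case (Suc k)
    then have k: "k < ?n" by simp
    let ?e = "unit_vec ?n k"
    have tr: "trunc r (Suc k) v = trunc r k v + v$k \<cdot>\<^sub>v ?e"
      by (rule eq_vecI) (auto simp: trunc_def unit_vec_def less_Suc_eq)
    have eL: "?e \<in> Lset r" using unit_in_L[OF k] .
    obtain m where m: "v$k = of_int m" using vL k unfolding Lset_def by (auto elim!: Ints_cases)
    have ekL: "v$k \<cdot>\<^sub>v ?e \<in> Lset r" using L_smult_int[OF eL] m by simp
    have "f (trunc r (Suc k) v) = f (trunc r k v) + f (v$k \<cdot>\<^sub>v ?e)"
      unfolding tr using add trunc_L[OF vL] ekL by blast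
    also have "f (v$k \<cdot>\<^sub>v ?e) = v$k \<cdot>\<^sub>v f ?e" using intm[OF eL, of m] m by simp
    also have "f ?e = ext r f ?e" using ext_unit[OF k] fc eL by simp
    also have "f (trunc r k v) = ext r f (trunc r k v)" using Suc by simp
    also have "ext r f (trunc r k v) + v$k \<cdot>\<^sub>v ext r f ?e = ext r f (trunc r (Suc k) v)"
      unfolding tr by (simp add: ext_add ext_smult trunc_def)
    finally show ?case by simp
  qed
  have "trunc r ?n v = v" using vc by (auto simp: trunc_def)
  then show ?thesis using step[of ?n] by simp
qed


lemma vec_double_cancel: "x \<in> carrier_vec n \<Longrightarrow> y \<in> carrier_vec n \<Longrightarrow> x + x = y + y \<Longrightarrow> x = (y :: rat vec)"
proof (rule eq_vecI)
  fix i assume x: "x \<in> carrier_vec n" and y: "y \<in> carrier_vec n" and e: "x + x = y + y" and i: "i < dim_vec y"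
  have "(x + x) $ i = (y + y) $ i" using e by simp
  then show "x $ i = y $ i" using x y i by simp
qed (auto)

lemma M_add_self: "v \<in> Mset r \<Longrightarrow> v + v = (2::rat) \<cdot>\<^sub>v v"
  by (rule eq_vecI) (auto simp: Mset_def)

lemma ext_agree_M:
  assumes add: "\<forall>u\<in>Mset r. \<forall>v\<in>Mset r. f (u + v) = f u + f v"
    and fc: "\<forall>u\<in>Mset r. f u \<in> carrier_vec (r+2)"
    and vM: "v \<in> Mset r"
  shows "ext r f v = f v"
proof -
  have addL: "\<forall>u\<in>Lset r. \<forall>v\<in>Lset r. f (u + v) = f u + f v" using add L_sub_M by blast
  have fcL: "\<forall>u\<in>Lset r. f u \<in> carrier_vec (r+2)" using fc L_sub_M by blast
  have vc: "v \<in> carrier_vec (r+2)" using vM by (auto simp: Mset_def)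
  have "v + v \<in> Lset r" using M_double[OF vM] M_add_self[OF vM] by simp
  then have "ext r f (v + v) = f (v + v)" using ext_agree_L[OF addL fcL] by blast
  then have "ext r f v + ext r f v = f v + f v" using add vM ext_add[OF vc vc] by simp
  then show ?thesis using vec_double_cancel[of "ext r f v" "r+2" "f v"] fc vM by simp
qed




lemma M_carrier: "v \<in> Mset r \<Longrightarrow> v \<in> carrier_vec (r+2)"
  by (simp add: Mset_def)

lemma L_carrier: "v \<in> Lset r \<Longrightarrow> v \<in> carrier_vec (r+2)"
  by (simp add: Lset_def)

lemma isom_D: assumes "f \<in> isom_group G r X"
  shows "bij_betw f X X" "\<forall>u\<in>X. \<forall>v\<in>X. f (u + v) = f u + f v"
    "\<forall>u\<in>X. \<forall>v\<in>X. qform G r (f u) (f v) = qform G r u v" "f \<in> extensional X"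
  using assms unfolding isom_group_def by auto

lemma part1: assumes eu: "even_unimodular G r" and f: "f \<in> isom_group G r (Mset r)"
  shows "\<forall>v\<in>Mset r. ext r f v = f v" "ext r f ` Lset r = Lset r"
    "restrict (ext r f) (Lset r) \<in> isom_group G r (Lset r)"
proof -
  note fD = isom_D[OF f]
  have fM: "f v \<in> Mset r" if "v \<in> Mset r" for v using bij_betw_apply[OF fD(1) that] by simp
  have fimg: "f ` Mset r = Mset r" using fD(1) by (simp add: bij_betw_def)
  have fc: "\<forall>u\<in>Mset r. f u \<in> carrier_vec (r+2)" using fM M_carrier by blast
  show agree: "\<forall>v\<in>Mset r. ext r f v = f v" using ext_agree_M[OF fD(2) fc] by blast
  have PMiff: "PM G r (f v) \<longleftrightarrow> PM G r v" if v: "v \<in> Mset r" for v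
  proof -
    have "(\<forall>w\<in>Mset r. qform G r (f v) w \<in> \<int>) \<longleftrightarrow> (\<forall>w\<in>f ` Mset r. qform G r (f v) w \<in> \<int>)"
      using fimg by simp
    also have "\<dots> \<longleftrightarrow> (\<forall>w\<in>Mset r. qform G r (f v) (f w) \<in> \<int>)" by simp
    also have "\<dots> \<longleftrightarrow> (\<forall>w\<in>Mset r. qform G r v w \<in> \<int>)" using fD(3) v by simp
    finally show ?thesis unfolding PM_def using fD(3) v by simp
  qed
  have Liff: "f v \<in> Lset r \<longleftrightarrow> v \<in> Lset r" if v: "v \<in> Mset r" for v
    using charM[OF eu v] charM[OF eu fM[OF v]] PMiff[OF v] by simp
  have fL: "f ` Lset r = Lset r"
  proof
    show "f ` Lset r \<subseteq> Lset r"
    proof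
      fix u assume "u \<in> f ` Lset r"
      then obtain v where v: "v \<in> Lset r" "u = f v" by blast
      then have "v \<in> Mset r" using L_sub_M by blast
      then show "u \<in> Lset r" using Liff[of v] v by simp
    qed
    show "Lset r \<subseteq> f ` Lset r"
    proof
      fix u assume u: "u \<in> Lset r"
      then have "u \<in> f ` Mset r" using fimg L_sub_M by blast
      then obtain v where v: "v \<in> Mset r" "u = f v" by blast
      then have "v \<in> Lset r" using Liff[OF v(1)] u by simp
      then show "u \<in> f ` Lset r" using v by blast
    qed
  qed
  have gf: "ext r f v = f v" if "v \<in> Lset r" for v using agree L_sub_M that by blast
  have "ext r f ` Lset r = f ` Lset r" by (rule image_cong) (simp_all add: gf)
  then show gL: "ext r f ` Lset r = Lset r" using fL by simp
  show "restrict (ext r f) (Lset r) \<in> isom_group G r (Lset r)"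
    unfolding isom_group_def
  proof (intro CollectI conjI ballI)
    have "inj_on f (Lset r)" using inj_on_subset[OF bij_betw_imp_inj_on[OF fD(1)] L_sub_M] .
    then have "inj_on (ext r f) (Lset r)" using inj_on_cong[of "Lset r" "ext r f" f] gf by simp
    then have "bij_betw (ext r f) (Lset r) (Lset r)" using gL by (simp add: bij_betw_def)
    then show "bij_betw (restrict (ext r f) (Lset r)) (Lset r) (Lset r)"
      by (rule bij_betw_cong[THEN iffD1, rotated]) simp
  next
    fix u v assume u: "u \<in> Lset r" and v: "v \<in> Lset r"
    show "restrict (ext r f) (Lset r) (u + v) = restrict (ext r f) (Lset r) u + restrict (ext r f) (Lset r) v"
      using u v L_add ext_add L_carrier by simp
  next
    fix u v assume u: "u \<in> Lset r" and v: "v \<in> Lset r"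
    show "qform G r (restrict (ext r f) (Lset r) u) (restrict (ext r f) (Lset r) v) = qform G r u v"
    proof -
      have "u \<in> Mset r" "v \<in> Mset r" using u v L_sub_M by auto
      then show ?thesis using u v gf fD(3) by simp
    qed
  qed simp
qed


lemma half_double: "v \<in> carrier_vec n \<Longrightarrow> (1/2::rat) \<cdot>\<^sub>v ((2::rat) \<cdot>\<^sub>v v) = v"
  by (rule eq_vecI) auto

lemma double_half: "v \<in> carrier_vec n \<Longrightarrow> (2::rat) \<cdot>\<^sub>v ((1/2::rat) \<cdot>\<^sub>v v) = v"
  by (rule eq_vecI) auto

lemma M_add: assumes u: "u \<in> Mset r" and v: "v \<in> Mset r" shows "u + v \<in> Mset r"
proof -
  obtain p q where a: "u \<in> carrier_vec (r+2)" "\<forall>i<r. u$i \<in> \<int>" "u$r = of_int p / 2"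
    "u$(Suc r) = of_int q / 2" "even (p - q)" using u by (rule Mset_E)
  obtain p' q' where b: "v \<in> carrier_vec (r+2)" "\<forall>i<r. v$i \<in> \<int>" "v$r = of_int p' / 2"
    "v$(Suc r) = of_int q' / 2" "even (p' - q')" using v by (rule Mset_E)
  have e1: "(u+v)$r = of_int (p+p') / 2" "(u+v)$(r+1) = of_int (q+q') / 2" using a b by (simp_all add: add_divide_distrib)
  have e2: "even ((p+p') - (q+q'))" using a(5) b(5) by presburger
  have ex: "\<exists>P Q :: int. (u+v)$r = of_int P / 2 \<and> (u+v)$(r+1) = of_int Q / 2 \<and> even (P - Q)"
    by (rule exI[of _ "p+p'"], rule exI[of _ "q+q'"]) (use e1 e2 in blast)
  moreover have "\<forall>i<r. (u+v)$i \<in> \<int>" using a b by auto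
  moreover have "u + v \<in> carrier_vec (r+2)" using a b by simp
  ultimately show ?thesis unfolding Mset_def by blast
qed

lemma part2: assumes eu: "even_unimodular G r" and F: "F \<in> isom_group G r (Lset r)"
  shows "\<forall>v\<in>Lset r. ext r F v = F v" "ext r F ` Mset r = Mset r"
    "restrict (ext r F) (Mset r) \<in> isom_group G r (Mset r)"
proof -
  note FD = isom_D[OF F]
  have FL: "F v \<in> Lset r" if "v \<in> Lset r" for v using bij_betw_apply[OF FD(1) that] by simp
  have Fimg: "F ` Lset r = Lset r" using FD(1) by (simp add: bij_betw_def)
  have Fc: "\<forall>u\<in>Lset r. F u \<in> carrier_vec (r+2)" using FL L_carrier by simp
  show agree: "\<forall>v\<in>Lset r. ext r F v = F v" using ext_agree_L[OF FD(2) Fc] by simp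
  let ?g = "ext r F"
  have CHiff: "CH G r (F c) \<longleftrightarrow> CH G r c" if c: "c \<in> Lset r" for c
  proof -
    have "CH G r (F c) \<longleftrightarrow> (\<forall>w\<in>F ` Lset r. \<exists>k::int. qform G r (F c) w - qform G r w w = 2 * of_int k)"
      unfolding CH_def using Fimg by simp
    also have "\<dots> \<longleftrightarrow> (\<forall>w\<in>Lset r. \<exists>k::int. qform G r (F c) (F w) - qform G r (F w) (F w) = 2 * of_int k)"
      by simp
    also have "\<dots> \<longleftrightarrow> CH G r c" unfolding CH_def using FD(3) c by simp
    finally show ?thesis .
  qed
  have gv: "?g v = (1/2::rat) \<cdot>\<^sub>v F ((2::rat) \<cdot>\<^sub>v v)" if v: "v \<in> Mset r" for v
  proof -
    have vc: "v \<in> carrier_vec (r+2)" using v M_carrier by simp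
    have "?g ((2::rat) \<cdot>\<^sub>v v) = F ((2::rat) \<cdot>\<^sub>v v)" using agree M_double[OF v] by simp
    then have "(2::rat) \<cdot>\<^sub>v ?g v = F ((2::rat) \<cdot>\<^sub>v v)" using ext_smult[OF vc] by simp
    then have "(1/2::rat) \<cdot>\<^sub>v ((2::rat) \<cdot>\<^sub>v ?g v) = (1/2::rat) \<cdot>\<^sub>v F ((2::rat) \<cdot>\<^sub>v v)" by simp
    then show ?thesis using half_double[of "?g v" "r+2"] by simp
  qed
  have gM: "?g v \<in> Mset r" if v: "v \<in> Mset r" for v
  proof (cases "v \<in> Lset r")
    case True
    then show ?thesis using agree FL L_sub_M by auto
  next
    case False
    have cL: "(2::rat) \<cdot>\<^sub>v v \<in> Lset r" using M_double[OF v] .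
    have "CH G r ((2::rat) \<cdot>\<^sub>v v)" using Mnot_L_char[OF eu v False] .
    then have "CH G r (F ((2::rat) \<cdot>\<^sub>v v))" using CHiff[OF cL] by simp
    then have "(1/2::rat) \<cdot>\<^sub>v F ((2::rat) \<cdot>\<^sub>v v) \<in> Mset r" using char_half[OF eu FL[OF cL]] by simp
    then show ?thesis using gv[OF v] by simp
  qed
  have Msub: "u \<in> ?g ` Mset r" if u: "u \<in> Mset r" for u
  proof (cases "u \<in> Lset r")
    case True
    then have "u \<in> F ` Lset r" using Fimg by simp
    then obtain v where v: "v \<in> Lset r" "u = F v" by blast
    then have "u = ?g v" "v \<in> Mset r" using agree L_sub_M by auto
    then show ?thesis by blast
  next
    case False
    have cL: "(2::rat) \<cdot>\<^sub>v u \<in> Lset r" using M_double[OF u] .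
    have ch: "CH G r ((2::rat) \<cdot>\<^sub>v u)" using Mnot_L_char[OF eu u False] .
    have "(2::rat) \<cdot>\<^sub>v u \<in> F ` Lset r" using Fimg cL by simp
    then obtain c' where c': "c' \<in> Lset r" "(2::rat) \<cdot>\<^sub>v u = F c'" by blast
    have "CH G r c'" using CHiff[OF c'(1)] ch c'(2) by simp
    then have vM: "(1/2::rat) \<cdot>\<^sub>v c' \<in> Mset r" using char_half[OF eu c'(1)] by simp
    have c'c: "c' \<in> carrier_vec (r+2)" using c'(1) L_carrier by simp
    have "?g ((1/2::rat) \<cdot>\<^sub>v c') = (1/2::rat) \<cdot>\<^sub>v F ((2::rat) \<cdot>\<^sub>v ((1/2::rat) \<cdot>\<^sub>v c'))" using gv[OF vM] .
    also have "\<dots> = (1/2::rat) \<cdot>\<^sub>v F c'" using double_half[OF c'c] by simp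
    also have "\<dots> = (1/2::rat) \<cdot>\<^sub>v ((2::rat) \<cdot>\<^sub>v u)" using c'(2) by simp
    also have "\<dots> = u" using half_double[of u "r+2"] M_carrier[OF u] by simp
    finally show ?thesis using vM by (metis image_eqI)
  qed
  show gimg: "?g ` Mset r = Mset r" using gM Msub by blast
  show "restrict ?g (Mset r) \<in> isom_group G r (Mset r)"
    unfolding isom_group_def
  proof (intro CollectI conjI ballI)
    have "inj_on ?g (Mset r)"
    proof (rule inj_onI)
      fix u v assume u: "u \<in> Mset r" and v: "v \<in> Mset r" and e: "?g u = ?g v"
      have "F ((2::rat) \<cdot>\<^sub>v u) = F ((2::rat) \<cdot>\<^sub>v v)"
        using e agree M_double[OF u] M_double[OF v] ext_smult M_carrier[OF u] M_carrier[OF v] by metis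
      then have "(2::rat) \<cdot>\<^sub>v u = (2::rat) \<cdot>\<^sub>v v"
        using inj_onD[OF bij_betw_imp_inj_on[OF FD(1)]] M_double[OF u] M_double[OF v] by blast
      then have "(1/2::rat) \<cdot>\<^sub>v ((2::rat) \<cdot>\<^sub>v u) = (1/2::rat) \<cdot>\<^sub>v ((2::rat) \<cdot>\<^sub>v v)" by simp
      then show "u = v" using half_double M_carrier[OF u] M_carrier[OF v] by metis
    qed
    then have "bij_betw ?g (Mset r) (Mset r)" using gimg by (simp add: bij_betw_def)
    then show "bij_betw (restrict ?g (Mset r)) (Mset r) (Mset r)"
      by (rule bij_betw_cong[THEN iffD1, rotated]) simp
  next
    fix u v assume u: "u \<in> Mset r" and v: "v \<in> Mset r"
    have "u + v \<in> Mset r"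
    proof -
      have "?g (u + v) = ?g u + ?g v" using ext_add M_carrier[OF u] M_carrier[OF v] by simp
      show ?thesis using u v unfolding Mset_def
        by (auto intro!: exI[of _ "_ + _"] simp: algebra_simps) (metis)?
    qed
    then show "restrict ?g (Mset r) (u + v) = restrict ?g (Mset r) u + restrict ?g (Mset r) v"
      using u v ext_add M_carrier by simp
  next
    fix u v assume u: "u \<in> Mset r" and v: "v \<in> Mset r"
    have uc: "u \<in> carrier_vec (r+2)" and vc: "v \<in> carrier_vec (r+2)" using u v M_carrier by auto
    have c1: "F ((2::rat) \<cdot>\<^sub>v u) \<in> carrier_vec (r+2)" "F ((2::rat) \<cdot>\<^sub>v v) \<in> carrier_vec (r+2)"
      using Fc M_double[OF u] M_double[OF v] by auto
    have "qform G r (?g u) (?g v) = qform G r ((1/2::rat) \<cdot>\<^sub>v F ((2::rat) \<cdot>\<^sub>v u)) ((1/2::rat) \<cdot>\<^sub>v F ((2::rat) \<cdot>\<^sub>v v))"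
      using gv u v by simp
    also have "\<dots> = 1/4 * qform G r (F ((2::rat) \<cdot>\<^sub>v u)) (F ((2::rat) \<cdot>\<^sub>v v))"
      using c1 by (simp add: qform_smult_left qform_smult_right)
    also have "\<dots> = 1/4 * qform G r ((2::rat) \<cdot>\<^sub>v u) ((2::rat) \<cdot>\<^sub>v v)"
      using FD(3) M_double[OF u] M_double[OF v] by simp
    also have "\<dots> = qform G r u v" using uc vc by (simp add: qform_smult_left qform_smult_right)
    finally show "qform G r (restrict ?g (Mset r) u) (restrict ?g (Mset r) v) = qform G r u v"
      using u v by simp
  qed simp
qed


lemma unit_in_M: "i < r+2 \<Longrightarrow> unit_vec (r+2) i \<in> Mset r"
  using unit_in_L L_sub_M by blast

theorem mainTheorem3:
  fixes G :: "int mat" and r :: nat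
  assumes "even_unimodular G r"
  shows "(\<forall>f \<in> isom_group G r (Mset r). \<exists>g. rat_linear r g \<and> (\<forall>v \<in> Mset r. g v = f v) \<and>
            g ` Lset r = Lset r \<and> restrict g (Lset r) \<in> isom_group G r (Lset r))
       \<and> (\<forall>f \<in> isom_group G r (Lset r). \<exists>g. rat_linear r g \<and> (\<forall>v \<in> Lset r. g v = f v) \<and>
            g ` Mset r = Mset r \<and> restrict g (Mset r) \<in> isom_group G r (Mset r))
       \<and> (\<exists>\<phi>. bij_betw \<phi> (isom_group G r (Mset r)) (isom_group G r (Lset r)) \<and>
            (\<forall>f \<in> isom_group G r (Mset r). \<exists>g. rat_linear r g \<and> (\<forall>v \<in> Mset r. g v = f v) \<and>
               \<phi> f = restrict g (Lset r)) \<and>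
            (\<forall>f \<in> isom_group G r (Mset r). \<forall>h \<in> isom_group G r (Mset r).
               \<phi> (compose (Mset r) f h) = compose (Lset r) (\<phi> f) (\<phi> h)))"
proof (intro conjI)
  note eu = assms
  show "\<forall>f \<in> isom_group G r (Mset r). \<exists>g. rat_linear r g \<and> (\<forall>v \<in> Mset r. g v = f v) \<and>
            g ` Lset r = Lset r \<and> restrict g (Lset r) \<in> isom_group G r (Lset r)"
  proof
    fix f assume f: "f \<in> isom_group G r (Mset r)"
    show "\<exists>g. rat_linear r g \<and> (\<forall>v \<in> Mset r. g v = f v) \<and>
            g ` Lset r = Lset r \<and> restrict g (Lset r) \<in> isom_group G r (Lset r)"
      using part1[OF eu f] ext_linear by blast
  qed
  show "\<forall>f \<in> isom_group G r (Lset r). \<exists>g. rat_linear r g \<and> (\<forall>v \<in> Lset r. g v = f v) \<and>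
            g ` Mset r = Mset r \<and> restrict g (Mset r) \<in> isom_group G r (Mset r)"
  proof
    fix f assume f: "f \<in> isom_group G r (Lset r)"
    show "\<exists>g. rat_linear r g \<and> (\<forall>v \<in> Lset r. g v = f v) \<and>
            g ` Mset r = Mset r \<and> restrict g (Mset r) \<in> isom_group G r (Mset r)"
      using part2[OF eu f] ext_linear by blast
  qed
  define \<phi> where "\<phi> f = restrict (ext r f) (Lset r)" for f
  have unitf: "ext r f (unit_vec (r+2) i) = f (unit_vec (r+2) i)"
    if f: "f \<in> isom_group G r (Mset r)" and i: "i < r+2" for f i
    using part1(1)[OF eu f] unit_in_M[OF i] by simp
  have bij: "bij_betw \<phi> (isom_group G r (Mset r)) (isom_group G r (Lset r))"
    unfolding bij_betw_def
  proof
    show "inj_on \<phi> (isom_group G r (Mset r))"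
    proof (rule inj_onI)
      fix f h assume f: "f \<in> isom_group G r (Mset r)" and h: "h \<in> isom_group G r (Mset r)"
        and e: "\<phi> f = \<phi> h"
      have "ext r f (unit_vec (r+2) i) = ext r h (unit_vec (r+2) i)" if i: "i < r+2" for i
      proof -
        have "\<phi> f (unit_vec (r+2) i) = \<phi> h (unit_vec (r+2) i)" using e by simp
        then show ?thesis using unit_in_L[OF i] by (simp add: \<phi>_def)
      qed
      then have "f (unit_vec (r+2) i) = h (unit_vec (r+2) i)" if i: "i < r+2" for i
        using unitf[OF f i] unitf[OF h i] i by simp
      then have eq: "ext r f = ext r h" by (rule ext_cong)
      show "f = h"
      proof (rule extensionalityI[OF isom_D(4)[OF f] isom_D(4)[OF h]])
        fix v assume v: "v \<in> Mset r"
        show "f v = h v" using part1(1)[OF eu f] part1(1)[OF eu h] v eq by metis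
      qed
    qed
    show "\<phi> ` isom_group G r (Mset r) = isom_group G r (Lset r)"
    proof
      show "\<phi> ` isom_group G r (Mset r) \<subseteq> isom_group G r (Lset r)"
        using part1(3)[OF eu] by (auto simp: \<phi>_def)
      show "isom_group G r (Lset r) \<subseteq> \<phi> ` isom_group G r (Mset r)"
      proof
        fix F assume F: "F \<in> isom_group G r (Lset r)"
        define f where "f = restrict (ext r F) (Mset r)"
        have f: "f \<in> isom_group G r (Mset r)" using part2(3)[OF eu F] by (simp add: f_def)
        have FLc: "F (unit_vec (r+2) i) \<in> carrier_vec (r+2)" if i: "i < r+2" for i
          using bij_betw_apply[OF isom_D(1)[OF F] unit_in_L[OF i]] L_carrier by simp
        have "ext r f = ext r F"
        proof (rule ext_cong)
          fix i assume i: "i < r+2"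
          show "f (unit_vec (r+2) i) = F (unit_vec (r+2) i)"
            using unit_in_M[OF i] ext_unit[where f=F, OF i FLc[OF i]] by (simp add: f_def)
        qed
        then have "\<phi> f = restrict (ext r F) (Lset r)" by (simp add: \<phi>_def)
        also have "\<dots> = F"
        proof (rule extensionalityI[OF restrict_extensional isom_D(4)[OF F]])
          fix v assume "v \<in> Lset r"
          then show "restrict (ext r F) (Lset r) v = F v" using part2(1)[OF eu F] by simp
        qed
        finally show "F \<in> \<phi> ` isom_group G r (Mset r)" using f by (metis image_eqI)
      qed
    qed
  qed
  have hom: "\<phi> (compose (Mset r) f h) = compose (Lset r) (\<phi> f) (\<phi> h)"
    if f: "f \<in> isom_group G r (Mset r)" and h: "h \<in> isom_group G r (Mset r)" for f h
  proof -
    note fD = isom_D[OF f] and hD = isom_D[OF h]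
    have hM: "h v \<in> Mset r" if "v \<in> Mset r" for v using bij_betw_apply[OF hD(1) that] by simp
    have fM: "f v \<in> Mset r" if "v \<in> Mset r" for v using bij_betw_apply[OF fD(1) that] by simp
    let ?k = "compose (Mset r) f h"
    have kadd: "\<forall>u\<in>Mset r. \<forall>v\<in>Mset r. ?k (u + v) = ?k u + ?k v"
    proof (intro ballI)
      fix u v assume u: "u \<in> Mset r" and v: "v \<in> Mset r"
      have uv: "u + v \<in> Mset r"
        using M_add[OF u v] .
      show "?k (u + v) = ?k u + ?k v" using uv u v hD(2) fD(2) hM by (simp add: compose_def)
    qed
    have kc: "\<forall>u\<in>Mset r. ?k u \<in> carrier_vec (r+2)" using fM hM M_carrier by (simp add: compose_def)
    show ?thesis
    proof (rule ext)
      fix x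
      show "\<phi> ?k x = compose (Lset r) (\<phi> f) (\<phi> h) x"
      proof (cases "x \<in> Lset r")
        case True
        then have xM: "x \<in> Mset r" using L_sub_M by blast
        have "ext r h x \<in> Lset r" using part1(2)[OF eu h] True by blast
        then have hxL: "h x \<in> Lset r" using part1(1)[OF eu h] xM by simp
        have "\<phi> ?k x = ?k x" using ext_agree_M[OF kadd kc xM] True by (simp add: \<phi>_def)
        also have "\<dots> = f (h x)" using xM by (simp add: compose_def)
        also have "\<dots> = compose (Lset r) (\<phi> f) (\<phi> h) x"
        proof -
          have hxM: "h x \<in> Mset r" using hxL L_sub_M by blast
          have "compose (Lset r) (\<phi> f) (\<phi> h) x = ext r f (ext r h x)"
            using True hxL part1(1)[OF eu h] xM by (simp add: compose_def \<phi>_def)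
          also have "\<dots> = f (h x)" using part1(1)[OF eu h] part1(1)[OF eu f] xM hxM by simp
          finally show ?thesis by simp
        qed
        finally show ?thesis .
      next
        case False
        then show ?thesis by (simp add: \<phi>_def compose_def)
      qed
    qed
  qed
  show "\<exists>\<phi>. bij_betw \<phi> (isom_group G r (Mset r)) (isom_group G r (Lset r)) \<and>
            (\<forall>f \<in> isom_group G r (Mset r). \<exists>g. rat_linear r g \<and> (\<forall>v \<in> Mset r. g v = f v) \<and>
               \<phi> f = restrict g (Lset r)) \<and>
            (\<forall>f \<in> isom_group G r (Mset r). \<forall>h \<in> isom_group G r (Mset r).
               \<phi> (compose (Mset r) f h) = compose (Lset r) (\<phi> f) (\<phi> h))"
  proof (rule exI[of _ \<phi>], intro conjI ballI)
    show "bij_betw \<phi> (isom_group G r (Mset r)) (isom_group G r (Lset r))" by (rule bij)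
  next
    fix f assume f: "f \<in> isom_group G r (Mset r)"
    show "\<exists>g. rat_linear r g \<and> (\<forall>v \<in> Mset r. g v = f v) \<and> \<phi> f = restrict g (Lset r)"
      using part1(1)[OF eu f] ext_linear by (auto simp: \<phi>_def)
  next
    fix f h assume "f \<in> isom_group G r (Mset r)" "h \<in> isom_group G r (Mset r)"
    then show "\<phi> (compose (Mset r) f h) = compose (Lset r) (\<phi> f) (\<phi> h)" by (rule hom)
  qed
qed

end
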